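(* Let $\alpha\in(0,\pi/2]$ and define the polynomial $$\begin{aligned} p_1(d)&=-32\sin^6\alpha\,d^{12}+256\sin^6\alpha\,d^{10}-1184\sin^6\alpha\,d^8\\ &\quad-96\sin^3\alpha\big(-40\alpha+9\sin\alpha+20\sin2\alpha+7\sin3\alpha-30\alpha\cos\alpha\big)d^6\\ &\quad+96\sin^3\alpha\big(-160\alpha+99\sin\alpha+80\sin2\alpha+7\sin3\alpha-120\alpha\cos\alpha\big)d^4\\ &\quad+13440(\alpha-\sin\alpha)\sin^5\alpha\,\csc^2\Big(\frac{\alpha}{2}\Big)d^2\\ &\quad-1800\big(6\alpha+8\alpha\cos\alpha-2\sin\alpha(3\cos\alpha+4)\big)^2, \end{aligned}$$ and let $p(x)=p_1(\sqrt{x})$, a polynomial of degree $6$ in $x$. Let $d_{max}=\csc(\alpha/2)\sqrt{5(\alpha\csc\alpha-1)}$. Let $q(x)=x^6-8x^5+37x^4-134x^3+284x^2-280x+100$; its real zeros are $1$ (a double zero) and two further zeros $x_3<x_4$ (numerically $x_3\approx2.1842$, $x_4\approx3.2872$). Then $p$ has at most four positive zeros on $(0,d_{max}^2)$. Moreover, if with $y_0=0$, $y_1=1$, $y_2=x_3$, $y_3=x_4$, $y_4=d_{max}^2$ the values $p(y_0),p(y_1),p(y_2),p(y_3),p(y_4)$ are of alternating signs, then $p$ has precisely four positive zeros.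
   Context: Here $\csc=1/\sin$. *)

theory Defs
  imports Complex_Main
begin

definition csc :: "real \<Rightarrow> real" where
  "csc x = 1 / sin x"

definition p1 :: "real \<Rightarrow> real \<Rightarrow> real" where
  "p1 \<alpha> d =
      - 32 * sin \<alpha> ^ 6 * d ^ 12 + 256 * sin \<alpha> ^ 6 * d ^ 10 - 1184 * sin \<alpha> ^ 6 * d ^ 8
    - 96 * sin \<alpha> ^ 3 * (- 40 * \<alpha> + 9 * sin \<alpha> + 20 * sin (2 * \<alpha>) + 7 * sin (3 * \<alpha>)
                           - 30 * \<alpha> * cos \<alpha>) * d ^ 6
    + 96 * sin \<alpha> ^ 3 * (- 160 * \<alpha> + 99 * sin \<alpha> + 80 * sin (2 * \<alpha>) + 7 * sin (3 * \<alpha>)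
                           - 120 * \<alpha> * cos \<alpha>) * d ^ 4
    + 13440 * (\<alpha> - sin \<alpha>) * sin \<alpha> ^ 5 * (csc (\<alpha> / 2)) ^ 2 * d ^ 2
    - 1800 * (6 * \<alpha> + 8 * \<alpha> * cos \<alpha> - 2 * sin \<alpha> * (3 * cos \<alpha> + 4)) ^ 2"

definition p :: "real \<Rightarrow> real \<Rightarrow> real" where
  "p \<alpha> x = p1 \<alpha> (sqrt x)"

definition dmax :: "real \<Rightarrow> real" where
  "dmax \<alpha> = csc (\<alpha> / 2) * sqrt (5 * (\<alpha> * csc \<alpha> - 1))"

definition q :: "real \<Rightarrow> real" where
  "q x = x ^ 6 - 8 * x ^ 5 + 37 * x ^ 4 - 134 * x ^ 3 + 284 * x ^ 2 - 280 * x + 100"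

end

theory Submission
  imports Defs
begin

lemma rolle_card:
  fixes f f' :: "real \<Rightarrow> real"
  assumes der: "\<And>x. (f has_real_derivative f' x) (at x)"
    and fin: "finite {x. f' x = 0}" and cd: "card {x. f' x = 0} \<le> n"
  shows "finite {x. f x = 0} \<and> card {x. f x = 0} \<le> Suc n"
proof (rule ccontr)
  assume neg: "\<not> (finite {x. f x = 0} \<and> card {x. f x = 0} \<le> Suc n)"
  obtain T where T: "T \<subseteq> {x. f x = 0}" "finite T" "card T = Suc (Suc n)"
  proof (cases "finite {x. f x = 0}")
    case True
    then show ?thesis using neg that
      by (meson not_less_eq_eq obtain_subset_with_card_n)
  next
    case False
    then show ?thesis using that by (meson infinite_arbitrarily_large)
  qed
  define xs where "xs = sorted_list_of_set T"
  have len: "length xs = Suc (Suc n)" using T by (simp add: xs_def)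
  have sw: "sorted_wrt (<) xs" unfolding xs_def by (rule strict_sorted_list_of_set)
  have inT: "i < length xs \<Longrightarrow> xs ! i \<in> T" for i
    using T(2) unfolding xs_def by (metis nth_mem set_sorted_list_of_set)
  have "\<exists>y. xs ! i < y \<and> y < xs ! Suc i \<and> f' y = 0" if "i < Suc n" for i
  proof -
    have lt: "xs ! i < xs ! Suc i" using sw len that by (simp add: sorted_wrt_iff_nth_less)
    have "xs ! i \<in> T" "xs ! Suc i \<in> T" using inT len that by auto
    then have eq: "f (xs ! i) = f (xs ! Suc i)" using T(1) by (metis (mono_tags) mem_Collect_eq subsetD)
    have cont: "continuous_on {xs ! i..xs ! Suc i} f"
      using der by (meson DERIV_isCont continuous_at_imp_continuous_on)
    obtain z where z: "xs ! i < z" "z < xs ! Suc i" "(\<lambda>v. f' z * v) = (\<lambda>v. 0)"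
      using Rolle_deriv[OF lt eq cont, of "\<lambda>x v. f' x * v"] der
      by (metis has_field_derivative_def mult.commute)
    then have "f' z = 0" by (metis mult_cancel_left1 zero_neq_one)
    with z show ?thesis by blast
  qed
  then obtain y where y: "\<And>i. i < Suc n \<Longrightarrow> xs ! i < y i \<and> y i < xs ! Suc i \<and> f' (y i) = 0"
    by metis
  have mono: "y i < y j" if "i < j" "j < Suc n" for i j
  proof -
    have "xs ! Suc i \<le> xs ! j" using sw len that
      by (metis Suc_lessI Suc_lessD less_Suc_eq order.strict_implies_order order_refl sorted_wrt_iff_nth_less)
    then show ?thesis using y[of i] y[of j] that by force
  qed
  have inj: "inj_on y {..<Suc n}"
    by (intro inj_onI) (metis lessThan_iff linorder_neqE_nat mono order_less_irrefl)
  have "y ` {..<Suc n} \<subseteq> {x. f' x = 0}" using y by auto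
  then have "card (y ` {..<Suc n}) \<le> card {x. f' x = 0}" using fin by (rule card_mono[rotated])
  with inj cd show False by (simp add: card_image)
qed

lemma sext_roots:
  fixes S d e g h :: real
  assumes S: "S > 0"
  shows "finite {x. -32*S*x^6 + 256*S*x^5 - 1184*S*x^4 + d*x^3 + e*x^2 + g*x + h = 0}
    \<and> card {x. -32*S*x^6 + 256*S*x^5 - 1184*S*x^4 + d*x^3 + e*x^2 + g*x + h = 0} \<le> 4"
proof -
  define f4 where "f4 = (\<lambda>x::real. -11520*S*x^2 + 30720*S*x - 28416*S)"
  define f3 where "f3 = (\<lambda>x::real. -3840*S*x^3 + 15360*S*x^2 - 28416*S*x + 6*d)"
  define f2 where "f2 = (\<lambda>x::real. -960*S*x^4 + 5120*S*x^3 - 14208*S*x^2 + 6*d*x + 2*e)"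
  define f1 where "f1 = (\<lambda>x::real. -192*S*x^5 + 1280*S*x^4 - 4736*S*x^3 + 3*d*x^2 + 2*e*x + g)"
  define f0 where "f0 = (\<lambda>x::real. -32*S*x^6 + 256*S*x^5 - 1184*S*x^4 + d*x^3 + e*x^2 + g*x + h)"
  have "f4 x < 0" for x
  proof -
    have e: "120*x^2 - 320*x + 296 = 120*(x-4/3)^2 + 248/3"
      by (simp add: power2_eq_square algebra_simps)
    have "120*x^2 - 320*x + 296 > 0" unfolding e by (simp add: add_nonneg_pos)
    moreover have "f4 x = -96*S*(120*x^2 - 320*x + 296)" unfolding f4_def by (simp add: algebra_simps)
    ultimately show ?thesis using S by (simp add: mult_pos_pos)
  qed
  then have z4: "{x. f4 x = 0} = {}" by (metis (mono_tags) empty_Collect_eq less_irrefl)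
  have d3: "(f3 has_real_derivative f4 x) (at x)" for x
    unfolding f3_def f4_def by (auto intro!: derivative_eq_intros simp: power2_eq_square algebra_simps)
  have d2: "(f2 has_real_derivative f3 x) (at x)" for x
    unfolding f3_def f2_def by (auto intro!: derivative_eq_intros simp: power2_eq_square algebra_simps)
  have d1: "(f1 has_real_derivative f2 x) (at x)" for x
    unfolding f1_def f2_def by (auto intro!: derivative_eq_intros simp: power2_eq_square algebra_simps)
  have d0: "(f0 has_real_derivative f1 x) (at x)" for x
    unfolding f1_def f0_def by (auto intro!: derivative_eq_intros simp: power2_eq_square algebra_simps)
  have r3: "finite {x. f3 x = 0} \<and> card {x. f3 x = 0} \<le> Suc 0"
    by (rule rolle_card[OF d3]) (simp_all add: z4)
  have r2: "finite {x. f2 x = 0} \<and> card {x. f2 x = 0} \<le> Suc (Suc 0)"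
    by (rule rolle_card[OF d2]) (use r3 in auto)
  have r1: "finite {x. f1 x = 0} \<and> card {x. f1 x = 0} \<le> Suc (Suc (Suc 0))"
    by (rule rolle_card[OF d1]) (use r2 in auto)
  have r0: "finite {x. f0 x = 0} \<and> card {x. f0 x = 0} \<le> Suc (Suc (Suc (Suc 0)))"
    by (rule rolle_card[OF d0]) (use r1 in auto)
  then show ?thesis unfolding f0_def by (simp add: numeral_eq_Suc)
qed

definition PP :: "real \<Rightarrow> real \<Rightarrow> real" where
  "PP a x = -32*(sin a ^ 6)*x^6 + 256*(sin a ^ 6)*x^5 - 1184*(sin a ^ 6)*x^4
    + (- 96 * sin a ^ 3 * (- 40 * a + 9 * sin a + 20 * sin (2 * a) + 7 * sin (3 * a) - 30 * a * cos a))*x^3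
    + (96 * sin a ^ 3 * (- 160 * a + 99 * sin a + 80 * sin (2 * a) + 7 * sin (3 * a) - 120 * a * cos a))*x^2
    + (13440 * (a - sin a) * sin a ^ 5 * (csc (a / 2)) ^ 2)*x
    + (- 1800 * (6 * a + 8 * a * cos a - 2 * sin a * (3 * cos a + 4)) ^ 2)"

lemma sqrt_pow_even: "x \<ge> 0 \<Longrightarrow> sqrt x ^ (2*k) = (x::real) ^ k"
  by (simp add: power_mult)

lemma p_eq: assumes "x \<ge> 0" shows "p a x = PP a x"
proof -
  have "sqrt x ^ 12 = x^6" "sqrt x ^ 10 = x^5" "sqrt x ^ 8 = x^4" "sqrt x ^ 6 = x^3"
       "sqrt x ^ 4 = x^2" "sqrt x ^ 2 = x"
    using sqrt_pow_even[OF assms, of 6] sqrt_pow_even[OF assms, of 5] sqrt_pow_even[OF assms, of 4]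
      sqrt_pow_even[OF assms, of 3] sqrt_pow_even[OF assms, of 2] sqrt_pow_even[OF assms, of 1]
    by simp_all
  then show ?thesis unfolding p_def p1_def PP_def by (simp add: algebra_simps)
qed

lemma PP_roots: assumes "0 < a" "a \<le> pi/2"
  shows "finite {x. PP a x = 0} \<and> card {x. PP a x = 0} \<le> 4"
proof -
  have "sin a > 0" using assms by (intro sin_gt_zero) auto
  then have "sin a ^ 6 > 0" by simp
  then show ?thesis unfolding PP_def by (rule sext_roots)
qed

lemma q_root: assumes "q x = 0" "x \<noteq> 1" shows "2 \<le> x \<and> x < 10/3"
proof -
  define r where "r = x^2*(x-3)^2 + 5*(3*x-10)*(x-2)"
  have "q x = (x-1)^2 * r" unfolding q_def r_def by (simp add: power2_eq_square power3_eq_cube power4_eq_xxxx algebra_simps eval_nat_numeral)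
  then have r0: "r = 0" using assms by simp
  have a: "x^2*(x-3)^2 \<ge> 0" by simp
  show ?thesis
  proof (rule ccontr)
    assume "\<not> ?thesis"
    then have "x < 2 \<or> x \<ge> 10/3" by auto
    then show False
    proof
      assume "x < 2"
      then have "5*(3*x-10)*(x-2) > 0" by (simp add: mult_neg_neg)
      with a r0 show False unfolding r_def by linarith
    next
      assume h: "x \<ge> 10/3"
      then have "5*(3*x-10)*(x-2) \<ge> 0" by simp
      moreover have "x^2*(x-3)^2 > 0" using h by simp
      ultimately show False using r0 unfolding r_def by linarith
    qed
  qed
qed

lemma dmax_bound: assumes "0 < a" "a \<le> pi/2" shows "(dmax a)^2 \<ge> 10/3"
proof -
  define f where "f = (\<lambda>t::real. 3*t - 4*sin t + sin t * cos t)"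
  have "f 0 \<le> f a"
  proof (rule DERIV_nonneg_imp_nondecreasing[of 0 a f])
    fix x
    have "(f has_real_derivative (3 - 4*cos x + (cos x * cos x - sin x * sin x))) (at x)"
      unfolding f_def by (auto intro!: derivative_eq_intros simp: algebra_simps)
    moreover have "3 - 4*cos x + (cos x * cos x - sin x * sin x) = 2*(cos x - 1)^2"
      using sin_cos_squared_add[of x] by (simp add: power2_eq_square algebra_simps)
    ultimately show "\<exists>y. DERIV f x :> y \<and> y \<ge> 0" by (metis zero_le_power2 mult_nonneg_nonneg zero_le_numeral)
  qed (use assms in auto)
  then have F: "3*a - 4*sin a + sin a * cos a \<ge> 0" unfolding f_def by simp
  have s: "sin a > 0" using assms by (intro sin_gt_zero) auto
  have sh: "sin (a/2) > 0" using assms by (intro sin_gt_zero) auto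
  have c: "cos a < 1" using assms cos_monotone_0_pi[of 0 a] by auto
  have h2: "sin (a/2)^2 = (1 - cos a)/2"
    using cos_double_sin[of "a/2"] by simp
  have sx: "sin a \<le> a" using assms by (simp add: sin_x_le_x)
  have nn: "5 * (a * csc a - 1) \<ge> 0" using s sx by (simp add: csc_def field_simps)
  have "(dmax a)^2 = 5 * (a / sin a - 1) / ((1 - cos a)/2)"
    unfolding dmax_def power_mult_distrib using nn by (simp add: csc_def h2 power_divide)
  also have "... = 10 * (a - sin a) / (sin a * (1 - cos a))"
    using s c by (simp add: field_simps)
  also have "... \<ge> 10/3"
    using s c F by (simp add: field_simps)
  finally show ?thesis .
qed

lemma ivt0:
  fixes f :: "real \<Rightarrow> real"
  assumes "a < b" "continuous_on {a..b} f" "f a * f b < 0"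
  shows "\<exists>z. a < z \<and> z < b \<and> f z = 0"
proof -
  have "f a < 0 \<and> f b > 0 \<or> f a > 0 \<and> f b < 0" using assms(3)
    by (metis mult_less_0_iff)
  then obtain z where z: "a \<le> z" "z \<le> b" "f z = 0"
    using IVT'[of f a 0 b] IVT2'[of f b 0 a] assms(1,2) by force
  moreover have "z \<noteq> a" "z \<noteq> b" using z assms(3) by auto
  ultimately have "a < z \<and> z < b \<and> f z = 0" by linarith
  then show ?thesis by blast
qed

lemma PP_cont: "continuous_on S (PP a)"
  unfolding PP_def by (intro continuous_intros)

theorem lemma5:
  fixes \<alpha> x3 x4 :: real
  assumes "0 < \<alpha>" and "\<alpha> \<le> pi / 2"
    and "{x. q x = 0} = {1, x3, x4}" and "x3 \<noteq> 1" and "x4 \<noteq> 1" and "x3 < x4"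
  shows "finite {x. 0 < x \<and> x < (dmax \<alpha>)\<^sup>2 \<and> p \<alpha> x = 0}
         \<and> card {x. 0 < x \<and> x < (dmax \<alpha>)\<^sup>2 \<and> p \<alpha> x = 0} \<le> 4
         \<and> ((\<forall>i<4. p \<alpha> ([0, 1, x3, x4, (dmax \<alpha>)\<^sup>2] ! i)
                     * p \<alpha> ([0, 1, x3, x4, (dmax \<alpha>)\<^sup>2] ! Suc i) < 0)
            \<longrightarrow> card {x. 0 < x \<and> x < (dmax \<alpha>)\<^sup>2 \<and> p \<alpha> x = 0} = 4)"
proof -
  define Z where "Z = {x. 0 < x \<and> x < (dmax \<alpha>)\<^sup>2 \<and> p \<alpha> x = 0}"
  define D where "D = (dmax \<alpha>)\<^sup>2"
  have sub: "Z \<subseteq> {x. PP \<alpha> x = 0}" unfolding Z_def using p_eq by auto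
  have R: "finite {x. PP \<alpha> x = 0} \<and> card {x. PP \<alpha> x = 0} \<le> 4" using PP_roots assms(1,2) by blast
  have fin: "finite Z" using R sub finite_subset by blast
  have c4: "card Z \<le> 4" using R sub card_mono order_trans by blast
  have "q x3 = 0" "q x4 = 0" using assms(3) by auto
  then have x3: "2 \<le> x3" and x4: "x4 < 10/3" using q_root assms(4,5) by auto
  have D: "10/3 \<le> D" unfolding D_def using dmax_bound assms(1,2) by auto
  have "card Z = 4" if alt: "\<forall>i<4. p \<alpha> ([0, 1, x3, x4, D] ! i) * p \<alpha> ([0, 1, x3, x4, D] ! Suc i) < 0"
  proof -
    have a0: "PP \<alpha> 0 * PP \<alpha> 1 < 0" using alt[rule_format, of 0] by (simp add: p_eq)
    have a1: "PP \<alpha> 1 * PP \<alpha> x3 < 0" using alt[rule_format, of 1] x3 by (simp add: p_eq)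
    have a2: "PP \<alpha> x3 * PP \<alpha> x4 < 0" using alt[rule_format, of 2] x3 assms(6)
      by (simp add: p_eq numeral_eq_Suc)
    have a3: "PP \<alpha> x4 * PP \<alpha> D < 0" using alt[rule_format, of 3] x3 assms(6) D
      by (simp add: p_eq numeral_eq_Suc)
    obtain z1 where z1: "0 < z1" "z1 < 1" "PP \<alpha> z1 = 0" using ivt0[OF _ PP_cont a0] by auto
    obtain z2 where z2: "1 < z2" "z2 < x3" "PP \<alpha> z2 = 0" using ivt0[OF _ PP_cont a1] x3 by auto
    obtain z3 where z3: "x3 < z3" "z3 < x4" "PP \<alpha> z3 = 0" using ivt0[OF _ PP_cont a2] assms(6) by auto
    obtain z4 where z4: "x4 < z4" "z4 < D" "PP \<alpha> z4 = 0" using ivt0[OF _ PP_cont a3] x4 D by auto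
    have "{z1, z2, z3, z4} \<subseteq> Z" unfolding Z_def D_def[symmetric]
      using z1 z2 z3 z4 x3 x4 D assms(6) by (auto simp: p_eq)
    moreover have "card {z1, z2, z3, z4} = 4"
      using z1 z2 z3 z4 x3 x4 D assms(6) by auto
    ultimately have "4 \<le> card Z" using fin by (metis card_mono)
    with c4 show ?thesis by simp
  qed
  then show ?thesis using fin c4 unfolding Z_def D_def by blast
qed

end
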